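(* Let $K$ be a positive integer, and let each of $N$ and $J$ be either a positive integer or $\infty$; write $[N]=\{1,\dots,N\}$ (with $[N]=\mathbb{Z}_+$ if $N=\infty$), and similarly for $[J]$. Let $\Theta=[\Theta_1,\dots,\Theta_K]$ with $\Theta_k:[N]\to\mathbb{R}$, let $A=[A_1,\dots,A_K]$ with $A_k:[J]\to\mathbb{R}$, let $Q=[Q_1,\dots,Q_K]$ with $Q_k:[J]\to\{0,1\}$, and let $M=\Theta A^T$, i.e. $M(i,j)=\sum_{k=1}^K\Theta_k(i)A_k(j)$. Suppose $(\Theta,A)$ satisfies the Model Assumptions (1)–(4) relative to $Q$ (see context), and suppose $\operatorname{supp}(Q_k)$ is non-empty for every $k$. Then for each $k\in\{1,\dots,K\}$, the factor loading $A_k$ is identifiable if and only if no $k'\neq k$ masks $k$.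
   Context: For $S\subset\{1,\dots,K\}$, $\mathcal{R}(S)\subset[J]$ is the set of indices $j$ such that $Q_k(j)=1$ for all $k\in S$ and $Q_k(j)=0$ for all $k\notin S$. For $\mathcal{R}\subset[J]$ and $S\subset\{1,\dots,K\}$, $A_{[\mathcal{R},S]}$ is the submatrix of $A$ with rows in $\mathcal{R}$ and columns in $S$. $\operatorname{supp}(Q_k)=\{j: Q_k(j)=1\}$. We say $k'$ masks $k$ if $\operatorname{supp}(Q_{k'})\subset\operatorname{supp}(Q_k)$. Model Assumptions for a pair $(\Theta,A)$ relative to $Q$: (1) the columns $\Theta_1,\dots,\Theta_K$ are linearly independent; (2) for every $S\subset\{1,\dots,K\}$ with $\mathcal{R}(S)$ non-empty, the columns of $A_{[\mathcal{R}(S),S]}$ are linearly independent; (3) for every $k$, $A_k(j)=0$ whenever $Q_k(j)=0$; (4) there is a constant $C>0$ with $\sup_{k,i}|\Theta_k(i)|<C$ and $\sup_{k,j}|A_k(j)|<C$. $A_k$ is identifiable if for every decomposition $M=\widetilde\Theta\widetilde A^T$ (with $\widetilde\Theta=[\widetilde\Theta_1,\dots,\widetilde\Theta_K]$, $\widetilde\Theta_k:[N]\to\mathbb{R}$, $\widetilde A=[\widetilde A_1,\dots,\widetilde A_K]$, $\widetilde A_k:[J]\to\mathbb{R}$) such that $(\widetilde\Theta,\widetilde A)$ satisfies Model Assumptions (1)–(4) relative to the same $Q$, the vectors $A_k$ and $\widetilde A_k$ are linearly dependent. *)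

theory Defs
  imports Main "HOL-Library.Extended_Nat"
begin

definition idx :: "enat \<Rightarrow> nat set" where
  "idx N = {i. 1 \<le> i \<and> enat i \<le> N}"

text \<open>A factor matrix is a function k \<mapsto> (column k); only k \<in> {1..K} and
  rows in the relevant index set matter. Q k j is the 0/1 entry (True = 1).\<close>

definition supp :: "enat \<Rightarrow> (nat \<Rightarrow> nat \<Rightarrow> bool) \<Rightarrow> nat \<Rightarrow> nat set" where
  "supp J Q k = {j \<in> idx J. Q k j}"

definition R_set :: "enat \<Rightarrow> nat \<Rightarrow> (nat \<Rightarrow> nat \<Rightarrow> bool) \<Rightarrow> nat set \<Rightarrow> nat set" where
  "R_set J K Q S = {j \<in> idx J. (\<forall>k\<in>S. Q k j) \<and> (\<forall>k\<in>{1..K} - S. \<not> Q k j)}"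

definition masks :: "enat \<Rightarrow> (nat \<Rightarrow> nat \<Rightarrow> bool) \<Rightarrow> nat \<Rightarrow> nat \<Rightarrow> bool" where
  "masks J Q k' k \<longleftrightarrow> supp J Q k' \<subseteq> supp J Q k"

definition cols_lin_indep :: "nat set \<Rightarrow> nat set \<Rightarrow> (nat \<Rightarrow> nat \<Rightarrow> real) \<Rightarrow> bool" where
  "cols_lin_indep I S F \<longleftrightarrow>
     (\<forall>c :: nat \<Rightarrow> real. (\<forall>i\<in>I. (\<Sum>k\<in>S. c k * F k i) = 0) \<longrightarrow> (\<forall>k\<in>S. c k = 0))"

definition model_assumptions ::
  "enat \<Rightarrow> enat \<Rightarrow> nat \<Rightarrow> (nat \<Rightarrow> nat \<Rightarrow> bool) \<Rightarrow> (nat \<Rightarrow> nat \<Rightarrow> real) \<Rightarrow> (nat \<Rightarrow> nat \<Rightarrow> real) \<Rightarrow> bool"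
  where
  "model_assumptions N J K Q Theta A \<longleftrightarrow>
     cols_lin_indep (idx N) {1..K} Theta \<and>
     (\<forall>S\<subseteq>{1..K}. R_set J K Q S \<noteq> {} \<longrightarrow> cols_lin_indep (R_set J K Q S) S A) \<and>
     (\<forall>k\<in>{1..K}. \<forall>j\<in>idx J. \<not> Q k j \<longrightarrow> A k j = 0) \<and>
     (\<exists>C>0. (\<forall>k\<in>{1..K}. \<forall>i\<in>idx N. \<bar>Theta k i\<bar> < C) \<and>
            (\<forall>k\<in>{1..K}. \<forall>j\<in>idx J. \<bar>A k j\<bar> < C))"

definition decomposes ::
  "enat \<Rightarrow> enat \<Rightarrow> nat \<Rightarrow> (nat \<Rightarrow> nat \<Rightarrow> real) \<Rightarrow> (nat \<Rightarrow> nat \<Rightarrow> real) \<Rightarrow> (nat \<Rightarrow> nat \<Rightarrow> real) \<Rightarrow> bool"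
  where
  "decomposes N J K M Theta A \<longleftrightarrow>
     (\<forall>i\<in>idx N. \<forall>j\<in>idx J. M i j = (\<Sum>k\<in>{1..K}. Theta k i * A k j))"

definition lin_dependent2 :: "nat set \<Rightarrow> (nat \<Rightarrow> real) \<Rightarrow> (nat \<Rightarrow> real) \<Rightarrow> bool" where
  "lin_dependent2 I u v \<longleftrightarrow> (\<exists>a b. (a \<noteq> 0 \<or> b \<noteq> 0) \<and> (\<forall>j\<in>I. a * u j + b * v j = 0))"

definition identifiable ::
  "enat \<Rightarrow> enat \<Rightarrow> nat \<Rightarrow> (nat \<Rightarrow> nat \<Rightarrow> bool) \<Rightarrow> (nat \<Rightarrow> nat \<Rightarrow> real) \<Rightarrow> (nat \<Rightarrow> nat \<Rightarrow> real) \<Rightarrow> nat \<Rightarrow> bool"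
  where
  "identifiable N J K Q M A k \<longleftrightarrow>
     (\<forall>Theta' A'. decomposes N J K M Theta' A' \<and> model_assumptions N J K Q Theta' A'
        \<longrightarrow> lin_dependent2 (idx J) (A k) (A' k))"

end

theory Submission
  imports Defs
begin

inductive rs :: "nat set \<Rightarrow> (nat \<Rightarrow> nat \<Rightarrow> real) \<Rightarrow> (nat \<Rightarrow> real) \<Rightarrow> bool" for I f where
  rs_base: "i \<in> I \<Longrightarrow> rs I f (\<lambda>k. f k i)"
| rs_zero: "rs I f (\<lambda>k. 0)"
| rs_add: "rs I f v \<Longrightarrow> rs I f u \<Longrightarrow> rs I f (\<lambda>k. v k + u k)"
| rs_scale: "rs I f v \<Longrightarrow> rs I f (\<lambda>k. a * v k)"

lemma rs_sum: "finite F \<Longrightarrow> (\<forall>x\<in>F. rs I f (u x)) \<Longrightarrow> rs I f (\<lambda>k. \<Sum>x\<in>F. u x k)"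
proof (induction F rule: finite_induct)
  case empty
  then show ?case using rs_zero by simp
next
  case (insert x F)
  then show ?case using rs_add[of I f "u x" "\<lambda>k. \<Sum>x\<in>F. u x k"] by simp
qed

lemma rs_trans: "rs I g v \<Longrightarrow> (\<forall>i\<in>I. rs I f (\<lambda>k. g k i)) \<Longrightarrow> rs I f v"
  by (induction rule: rs.induct) (auto intro: rs.intros)

lemma rs_zero_coord: "rs I g v \<Longrightarrow> (\<forall>i\<in>I. g k i = 0) \<Longrightarrow> v k = 0"
  by (induction rule: rs.induct) auto

lemma elim_lemma:
  "cols_lin_indep I {1..K} f \<Longrightarrow> l \<in> {1..K} \<Longrightarrow>
     \<exists>v. rs I f v \<and> (\<forall>k\<in>{1..K}. v k = (if k = l then 1 else 0))"
proof (induction K arbitrary: f l)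
  case 0
  then show ?case by simp
next
  case (Suc K)
  note ind = Suc.prems(1)[unfolded cols_lin_indep_def]
  have "\<exists>i0\<in>I. f (Suc K) i0 \<noteq> 0"
  proof (rule ccontr)
    assume "\<not> ?thesis"
    hence z: "\<forall>i\<in>I. f (Suc K) i = 0" by auto
    let ?c = "\<lambda>k. if k = Suc K then (1::real) else 0"
    have "\<forall>i\<in>I. (\<Sum>k\<in>{1..Suc K}. ?c k * f k i) = 0"
      using z by (simp add: if_distrib sum.If_cases)
    hence "\<forall>k\<in>{1..Suc K}. ?c k = 0" by (rule mp[OF spec[OF ind, of ?c]])
    hence "?c (Suc K) = 0" by (rule bspec) simp
    thus False by simp
  qed
  then obtain i0 where i0: "i0 \<in> I" "f (Suc K) i0 \<noteq> 0" by auto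
  define p where "p = f (Suc K) i0"
  have p: "p \<noteq> 0" using i0 p_def by simp
  define g where "g = (\<lambda>k i. f k i - (f (Suc K) i / p) * f k i0)"
  have gind: "cols_lin_indep I {1..K} g"
    unfolding cols_lin_indep_def
  proof (intro allI impI)
    fix c :: "nat \<Rightarrow> real"
    assume hc: "\<forall>i\<in>I. (\<Sum>k\<in>{1..K}. c k * g k i) = 0"
    define c' where "c' = c(Suc K := - (\<Sum>k\<in>{1..K}. c k * f k i0) / p)"
    have "\<forall>i\<in>I. (\<Sum>k\<in>{1..Suc K}. c' k * f k i) = 0"
    proof
      fix i assume "i \<in> I"
      have e1: "(\<Sum>k\<in>{1..K}. c' k * f k i) = (\<Sum>k\<in>{1..K}. c k * f k i)"
        by (rule sum.cong) (auto simp: c'_def)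
      have e2: "(\<Sum>k\<in>{1..K}. c k * g k i) = (\<Sum>k\<in>{1..K}. c k * f k i) - (f (Suc K) i / p) * (\<Sum>k\<in>{1..K}. c k * f k i0)"
        unfolding g_def by (simp add: algebra_simps sum_subtractf sum_distrib_left)
      have "(\<Sum>k\<in>{1..Suc K}. c' k * f k i) = (\<Sum>k\<in>{1..K}. c' k * f k i) + c' (Suc K) * f (Suc K) i"
        by simp
      also have "\<dots> = (\<Sum>k\<in>{1..K}. c k * g k i)"
        using e1 e2 by (simp add: c'_def algebra_simps)
      finally show "(\<Sum>k\<in>{1..Suc K}. c' k * f k i) = 0" using hc \<open>i \<in> I\<close> by simp
    qed
    hence "\<forall>k\<in>{1..Suc K}. c' k = 0" by (rule mp[OF spec[OF ind, of c']])
    show "\<forall>k\<in>{1..K}. c k = 0"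
    proof
      fix k assume k: "k \<in> {1..K}"
      hence "c' k = 0" using \<open>\<forall>k\<in>{1..Suc K}. c' k = 0\<close> by auto
      thus "c k = 0" using k by (simp add: c'_def)
    qed
  qed
  have grs: "\<forall>i\<in>I. rs I f (\<lambda>k. g k i)"
  proof
    fix i assume "i \<in> I"
    have "rs I f (\<lambda>k. f k i + (- (f (Suc K) i / p)) * f k i0)"
      by (intro rs_add rs_scale rs_base \<open>i \<in> I\<close> i0(1))
    thus "rs I f (\<lambda>k. g k i)" unfolding g_def by simp
  qed
  have g0: "\<forall>i\<in>I. g (Suc K) i = 0" unfolding g_def p_def using i0 by simp
  have small: "\<exists>v. rs I f v \<and> (\<forall>k\<in>{1..Suc K}. v k = (if k = l' then 1 else 0))"
    if l': "l' \<in> {1..K}" for l'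
  proof -
    obtain v where v: "rs I g v" "\<forall>k\<in>{1..K}. v k = (if k = l' then 1 else 0)"
      using Suc.IH[OF gind l'] by blast
    have "v (Suc K) = 0" using rs_zero_coord[OF v(1)] g0 by blast
    moreover have "rs I f v" using rs_trans[OF v(1) grs] .
    moreover have "\<forall>k\<in>{1..Suc K}. v k = (if k = l' then 1 else 0)"
    proof
      fix k assume k: "k \<in> {1..Suc K}"
      show "v k = (if k = l' then 1 else 0)"
      proof (cases "k = Suc K")
        case True thus ?thesis using \<open>v (Suc K) = 0\<close> l' by auto
      next
        case False thus ?thesis using k v(2) by auto
      qed
    qed
    ultimately show ?thesis by blast
  qed
  show ?case
  proof (cases "l \<in> {1..K}")
    case True
    then show ?thesis using small by blast
  next
    case False
    hence l: "l = Suc K" using Suc.prems(2) by auto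
    obtain V where V: "\<forall>l'\<in>{1..K}. rs I f (V l') \<and> (\<forall>k\<in>{1..Suc K}. V l' k = (if k = l' then 1 else 0))"
      using small by metis
    define v where "v = (\<lambda>k. (1/p) * (f k i0 + (-1) * (\<Sum>k'\<in>{1..K}. f k' i0 * V k' k)))"
    have "rs I f v" unfolding v_def
      by (intro rs_scale rs_add rs_base i0(1) rs_sum) (use V in \<open>auto intro: rs_scale\<close>)
    moreover have "\<forall>k\<in>{1..Suc K}. v k = (if k = l then 1 else 0)"
    proof
      fix k assume k: "k \<in> {1..Suc K}"
      show "v k = (if k = l then 1 else 0)"
      proof (cases "k = Suc K")
        case True
        have "(\<Sum>k'\<in>{1..K}. f k' i0 * V k' k) = 0"
          using V True by (intro sum.neutral) auto
        then show ?thesis using True l p by (simp add: v_def p_def)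
      next
        case False
        hence kK: "k \<in> {1..K}" using k by auto
        have "(\<Sum>k'\<in>{1..K}. f k' i0 * V k' k) = (\<Sum>k'\<in>{1..K}. if k' = k then f k i0 else 0)"
          using V k by (intro sum.cong) auto
        also have "\<dots> = f k i0" using kK by simp
        finally show ?thesis using False l by (simp add: v_def)
      qed
    qed
    ultimately show ?thesis by blast
  qed
qed


lemma transfer_rs:
  assumes d1: "decomposes N J K M Theta A" and d2: "decomposes N J K M Theta' A'"
    and r: "rs (idx N) Theta' v"
  shows "\<exists>u. \<forall>j\<in>idx J. (\<Sum>l\<in>{1..K}. v l * A' l j) = (\<Sum>m\<in>{1..K}. u m * A m j)"
  using r
proof induction
  case (rs_base i)
  show ?case
  proof (intro exI[of _ "\<lambda>m. Theta m i"] ballI)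
    fix j assume "j \<in> idx J"
    thus "(\<Sum>l\<in>{1..K}. Theta' l i * A' l j) = (\<Sum>m\<in>{1..K}. Theta m i * A m j)"
      using d1 d2 rs_base unfolding decomposes_def by metis
  qed
next
  case rs_zero
  show ?case by (intro exI[of _ "\<lambda>m. 0"]) simp
next
  case (rs_add v w)
  then obtain u1 u2 where u1: "\<forall>j\<in>idx J. (\<Sum>l\<in>{1..K}. v l * A' l j) = (\<Sum>m\<in>{1..K}. u1 m * A m j)"
    and u2: "\<forall>j\<in>idx J. (\<Sum>l\<in>{1..K}. w l * A' l j) = (\<Sum>m\<in>{1..K}. u2 m * A m j)" by blast
  show ?case
  proof (intro exI[of _ "\<lambda>m. u1 m + u2 m"] ballI)
    fix j assume j: "j \<in> idx J"
    have "(\<Sum>l\<in>{1..K}. (v l + w l) * A' l j) = (\<Sum>l\<in>{1..K}. v l * A' l j) + (\<Sum>l\<in>{1..K}. w l * A' l j)"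
      by (simp add: distrib_right sum.distrib)
    also have "\<dots> = (\<Sum>m\<in>{1..K}. u1 m * A m j) + (\<Sum>m\<in>{1..K}. u2 m * A m j)" using u1 u2 j by simp
    also have "\<dots> = (\<Sum>m\<in>{1..K}. (u1 m + u2 m) * A m j)"
      by (simp add: distrib_right sum.distrib)
    finally show "(\<Sum>l\<in>{1..K}. (v l + w l) * A' l j) = (\<Sum>m\<in>{1..K}. (u1 m + u2 m) * A m j)" .
  qed
next
  case (rs_scale v a)
  then obtain u1 where u1: "\<forall>j\<in>idx J. (\<Sum>l\<in>{1..K}. v l * A' l j) = (\<Sum>m\<in>{1..K}. u1 m * A m j)"
    by blast
  show ?case
  proof (intro exI[of _ "\<lambda>m. a * u1 m"] ballI)
    fix j assume j: "j \<in> idx J"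
    have "(\<Sum>l\<in>{1..K}. (a * v l) * A' l j) = a * (\<Sum>l\<in>{1..K}. v l * A' l j)"
      by (simp add: sum_distrib_left mult.assoc)
    also have "\<dots> = a * (\<Sum>m\<in>{1..K}. u1 m * A m j)" using u1 j by simp
    also have "\<dots> = (\<Sum>m\<in>{1..K}. (a * u1 m) * A m j)"
      by (simp add: sum_distrib_left mult.assoc)
    finally show "(\<Sum>l\<in>{1..K}. (a * v l) * A' l j) = (\<Sum>m\<in>{1..K}. (a * u1 m) * A m j)" .
  qed
qed

lemma R_set_memI:
  assumes "j \<in> idx J" shows "j \<in> R_set J K Q {l\<in>{1..K}. Q l j}"
  using assms unfolding R_set_def by auto

lemma sum_restrict_S:
  assumes "S \<subseteq> {1..(K::nat)}" and "\<forall>l\<in>{1..K} - S. g l = (0::real)"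
  shows "(\<Sum>l\<in>S. g l) = (\<Sum>l\<in>{1..K}. g l)"
  using assms by (intro sum.mono_neutral_left) auto

theorem theorem2:
  fixes K :: nat and N J :: enat
    and Theta A M :: "nat \<Rightarrow> nat \<Rightarrow> real" and Q :: "nat \<Rightarrow> nat \<Rightarrow> bool"
  assumes "K \<ge> 1" and "N \<ge> 1" and "J \<ge> 1"
    and "decomposes N J K M Theta A"
    and "model_assumptions N J K Q Theta A"
    and "\<forall>k\<in>{1..K}. supp J Q k \<noteq> {}"
    and "k \<in> {1..K}"
  shows "identifiable N J K Q M A k \<longleftrightarrow> \<not> (\<exists>k'\<in>{1..K}. k' \<noteq> k \<and> masks J Q k' k)"
proof -
  note dec = assms(4)
  have MA1: "cols_lin_indep (idx N) {1..K} Theta"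
    and MA2: "\<forall>S\<subseteq>{1..K}. R_set J K Q S \<noteq> {} \<longrightarrow> cols_lin_indep (R_set J K Q S) S A"
    and MA3: "\<forall>k\<in>{1..K}. \<forall>j\<in>idx J. \<not> Q k j \<longrightarrow> A k j = 0"
    using assms(5) unfolding model_assumptions_def by blast+
  obtain C where C: "C > 0" "\<forall>k\<in>{1..K}. \<forall>i\<in>idx N. \<bar>Theta k i\<bar> < C"
    "\<forall>k\<in>{1..K}. \<forall>j\<in>idx J. \<bar>A k j\<bar> < C"
    using assms(5) unfolding model_assumptions_def by blast
  have kK: "k \<in> {1..K}" using assms(7) .
  show ?thesis
  proof
    assume idf: "identifiable N J K Q M A k"
    show "\<not> (\<exists>k'\<in>{1..K}. k' \<noteq> k \<and> masks J Q k' k)"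
    proof
      assume "\<exists>k'\<in>{1..K}. k' \<noteq> k \<and> masks J Q k' k"
      then obtain k' where k': "k' \<in> {1..K}" "k' \<noteq> k" "masks J Q k' k" by blast
      have msk: "\<And>j. j \<in> idx J \<Longrightarrow> Q k' j \<Longrightarrow> Q k j"
        using k'(3) unfolding masks_def supp_def by blast
      define Th2 where "Th2 = (\<lambda>l i. if l = k' then Theta k' i - Theta k i else Theta l i)"
      define A2 where "A2 = (\<lambda>l j. if l = k then A k j + A k' j else A l j)"
      have dec2: "decomposes N J K M Th2 A2"
        unfolding decomposes_def
      proof (intro ballI)
        fix i j assume i: "i \<in> idx N" and j: "j \<in> idx J"
        have "(\<Sum>l\<in>{1..K}. Th2 l i * A2 l j) = (\<Sum>l\<in>{1..K}. Theta l i * A l j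
              + (if l = k then Theta k i * A k' j else 0) - (if l = k' then Theta k i * A k' j else 0))"
          by (rule sum.cong) (auto simp: Th2_def A2_def algebra_simps k'(2))
        also have "\<dots> = (\<Sum>l\<in>{1..K}. Theta l i * A l j)"
          using kK k'(1) by (simp add: sum_subtractf sum.distrib)
        finally show "M i j = (\<Sum>l\<in>{1..K}. Th2 l i * A2 l j)"
          using dec i j unfolding decomposes_def by simp
      qed
      have ma2_1: "cols_lin_indep (idx N) {1..K} Th2"
        unfolding cols_lin_indep_def
      proof (intro allI impI)
        fix c :: "nat \<Rightarrow> real"
        assume hc: "\<forall>i\<in>idx N. (\<Sum>l\<in>{1..K}. c l * Th2 l i) = 0"
        define c' where "c' = c(k := c k - c k')"
        have "\<forall>i\<in>idx N. (\<Sum>l\<in>{1..K}. c' l * Theta l i) = 0"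
        proof
          fix i assume i: "i \<in> idx N"
          have "(\<Sum>l\<in>{1..K}. c' l * Theta l i) = (\<Sum>l\<in>{1..K}. c l * Th2 l i
              + (if l = k' then c k' * Theta k i else 0) - (if l = k then c k' * Theta k i else 0))"
            by (rule sum.cong) (auto simp: Th2_def c'_def algebra_simps k'(2))
          also have "\<dots> = (\<Sum>l\<in>{1..K}. c l * Th2 l i)"
            using kK k'(1) by (simp add: sum_subtractf sum.distrib)
          finally show "(\<Sum>l\<in>{1..K}. c' l * Theta l i) = 0" using hc i by simp
        qed
        hence c'0: "\<forall>l\<in>{1..K}. c' l = 0" using MA1 unfolding cols_lin_indep_def by blast
        show "\<forall>l\<in>{1..K}. c l = 0"
        proof
          fix l assume l: "l \<in> {1..K}"
          have "c' k' = 0" using c'0 k'(1) by blast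
          hence "c k' = 0" using k'(2) by (simp add: c'_def)
          moreover have "c' k = 0" using c'0 kK by blast
          ultimately have "c k = 0" by (simp add: c'_def)
          show "c l = 0"
          proof (cases "l = k")
            case False
            have "c' l = 0" using c'0 l by blast
            thus ?thesis using False by (simp add: c'_def)
          qed (use \<open>c k = 0\<close> in simp)
        qed
      qed
      have ma2_2: "\<forall>S\<subseteq>{1..K}. R_set J K Q S \<noteq> {} \<longrightarrow> cols_lin_indep (R_set J K Q S) S A2"
      proof (intro allI impI)
        fix S assume S: "S \<subseteq> {1..K}" and RS: "R_set J K Q S \<noteq> {}"
        have indS: "cols_lin_indep (R_set J K Q S) S A" using MA2 S RS by blast
        have finS: "finite S" using S finite_subset by blast
        show "cols_lin_indep (R_set J K Q S) S A2"
          unfolding cols_lin_indep_def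
        proof (intro allI impI)
          fix c :: "nat \<Rightarrow> real"
          assume hc: "\<forall>j\<in>R_set J K Q S. (\<Sum>l\<in>S. c l * A2 l j) = 0"
          have expand: "(\<Sum>l\<in>S. c l * A2 l j) = (\<Sum>l\<in>S. c l * A l j) + (if k \<in> S then c k * A k' j else 0)" for j
          proof -
            have "(\<Sum>l\<in>S. c l * A2 l j) = (\<Sum>l\<in>S. c l * A l j + (if l = k then c k * A k' j else 0))"
              by (rule sum.cong) (auto simp: A2_def algebra_simps)
            also have "\<dots> = (\<Sum>l\<in>S. c l * A l j) + (if k \<in> S then c k * A k' j else 0)"
              using finS by (simp add: sum.distrib)
            finally show ?thesis .
          qed
          show "\<forall>l\<in>S. c l = 0"
          proof (cases "k \<in> S \<and> k' \<in> S")
            case True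
            define c'' where "c'' = c(k' := c k' + c k)"
            have "\<forall>j\<in>R_set J K Q S. (\<Sum>l\<in>S. c'' l * A l j) = 0"
            proof
              fix j assume j: "j \<in> R_set J K Q S"
              have "(\<Sum>l\<in>S. c'' l * A l j) = (\<Sum>l\<in>S. c l * A l j + (if l = k' then c k * A k' j else 0))"
                by (rule sum.cong) (auto simp: c''_def algebra_simps)
              also have "\<dots> = (\<Sum>l\<in>S. c l * A2 l j)"
                using finS True expand[of j] by (simp add: sum.distrib)
              finally show "(\<Sum>l\<in>S. c'' l * A l j) = 0" using hc j by simp
            qed
            hence c''0: "\<forall>l\<in>S. c'' l = 0" using indS unfolding cols_lin_indep_def by blast
            have ck: "c k = 0" using c''0 True k'(2) by (auto simp: c''_def)
            show ?thesis
            proof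
              fix l assume l: "l \<in> S"
              show "c l = 0"
              proof (cases "l = k'")
                case True
                then show ?thesis using c''0 l ck by (auto simp: c''_def)
              next
                case False
                then show ?thesis using c''0 l by (auto simp: c''_def)
              qed
            qed
          next
            case False
            have "\<forall>j\<in>R_set J K Q S. (\<Sum>l\<in>S. c l * A l j) = 0"
            proof
              fix j assume j: "j \<in> R_set J K Q S"
              have "(if k \<in> S then c k * A k' j else 0) = 0"
              proof (cases "k \<in> S")
                case True
                hence "k' \<notin> S" using False by blast
                hence "\<not> Q k' j" using j k'(1) unfolding R_set_def by blast
                moreover have "j \<in> idx J" using j unfolding R_set_def by blast
                ultimately have "A k' j = 0" using MA3 k'(1) by blast
                thus ?thesis by simp
              qed simp
              thus "(\<Sum>l\<in>S. c l * A l j) = 0" using hc j expand[of j] by simp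
            qed
            thus ?thesis using indS unfolding cols_lin_indep_def by blast
          qed
        qed
      qed
      have ma2_3: "\<forall>l\<in>{1..K}. \<forall>j\<in>idx J. \<not> Q l j \<longrightarrow> A2 l j = 0"
      proof (intro ballI impI)
        fix l j assume l: "l \<in> {1..K}" and j: "j \<in> idx J" and nq: "\<not> Q l j"
        show "A2 l j = 0"
        proof (cases "l = k")
          case True
          hence "\<not> Q k' j" using msk j nq by blast
          hence "A k' j = 0" using MA3 k'(1) j by blast
          moreover have "A k j = 0" using MA3 kK j nq True by blast
          ultimately show ?thesis using True by (simp add: A2_def)
        next
          case False
          thus ?thesis using MA3 l j nq by (simp add: A2_def)
        qed
      qed
      have ma2_4: "\<exists>C>0. (\<forall>l\<in>{1..K}. \<forall>i\<in>idx N. \<bar>Th2 l i\<bar> < C) \<and>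
            (\<forall>l\<in>{1..K}. \<forall>j\<in>idx J. \<bar>A2 l j\<bar> < C)"
      proof (intro exI[of _ "2 * C"] conjI ballI)
        show "2 * C > 0" using C(1) by simp
      next
        fix l i assume l: "l \<in> {1..K}" and i: "i \<in> idx N"
        have a: "\<bar>Theta k' i\<bar> < C" "\<bar>Theta k i\<bar> < C" "\<bar>Theta l i\<bar> < C"
          using C(2) k'(1) kK l i by blast+
        show "\<bar>Th2 l i\<bar> < 2 * C" using a C(1) by (auto simp: Th2_def abs_diff_le_iff abs_less_iff)
      next
        fix l j assume l: "l \<in> {1..K}" and j: "j \<in> idx J"
        have a: "\<bar>A k' j\<bar> < C" "\<bar>A k j\<bar> < C" "\<bar>A l j\<bar> < C"
          using C(3) k'(1) kK l j by blast+
        show "\<bar>A2 l j\<bar> < 2 * C" using a C(1) by (auto simp: A2_def abs_less_iff)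
      qed
      have ma2: "model_assumptions N J K Q Th2 A2"
        unfolding model_assumptions_def using ma2_1 ma2_2 ma2_3 ma2_4 by blast
      have "lin_dependent2 (idx J) (A k) (A2 k)"
        using idf dec2 ma2 unfolding identifiable_def by blast
      then obtain a b where ab: "a \<noteq> 0 \<or> b \<noteq> 0" "\<forall>j\<in>idx J. a * A k j + b * A2 k j = 0"
        unfolding lin_dependent2_def by blast
      obtain j0 where j0: "j0 \<in> supp J Q k'" using assms(6) k'(1) by blast
      have j0J: "j0 \<in> idx J" and q0: "Q k' j0" using j0 unfolding supp_def by auto
      have qk0: "Q k j0" using msk j0J q0 .
      define S0 where "S0 = {l\<in>{1..K}. Q l j0}"
      have S0: "S0 \<subseteq> {1..K}" "k \<in> S0" "k' \<in> S0" using kK k'(1) q0 qk0 by (auto simp: S0_def)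
      have finS0: "finite S0" using S0(1) finite_subset by blast
      have RS0: "R_set J K Q S0 \<noteq> {}" using R_set_memI[OF j0J, of K Q] S0_def by blast
      have ind0: "cols_lin_indep (R_set J K Q S0) S0 A" using MA2 S0(1) RS0 by blast
      define c where "c = (\<lambda>l. if l = k then a + b else if l = k' then b else (0::real))"
      have "\<forall>j\<in>R_set J K Q S0. (\<Sum>l\<in>S0. c l * A l j) = 0"
      proof
        fix j assume j: "j \<in> R_set J K Q S0"
        hence jJ: "j \<in> idx J" unfolding R_set_def by blast
        have "(\<Sum>l\<in>S0. c l * A l j) = (\<Sum>l\<in>S0. (if l = k then (a + b) * A k j else 0) + (if l = k' then b * A k' j else 0))"
          by (rule sum.cong) (auto simp: c_def k'(2))
        also have "\<dots> = (a + b) * A k j + b * A k' j"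
          using finS0 S0 by (simp add: sum.distrib)
        also have "\<dots> = a * A k j + b * A2 k j" by (simp add: A2_def algebra_simps)
        finally show "(\<Sum>l\<in>S0. c l * A l j) = 0" using ab(2) jJ by simp
      qed
      hence "\<forall>l\<in>S0. c l = 0" using ind0 unfolding cols_lin_indep_def by blast
      hence "a + b = 0" "b = 0" using S0 k'(2) by (auto simp: c_def)
      thus False using ab(1) by simp
    qed
  next
    assume nm: "\<not> (\<exists>k'\<in>{1..K}. k' \<noteq> k \<and> masks J Q k' k)"
    show "identifiable N J K Q M A k"
      unfolding identifiable_def
    proof (intro allI impI, elim conjE)
      fix Th' A' assume dec': "decomposes N J K M Th' A'" and ma': "model_assumptions N J K Q Th' A'"
      have ind': "cols_lin_indep (idx N) {1..K} Th'"
        and MA3': "\<forall>k\<in>{1..K}. \<forall>j\<in>idx J. \<not> Q k j \<longrightarrow> A' k j = 0"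
        using ma' unfolding model_assumptions_def by blast+
      obtain v where v: "rs (idx N) Th' v" "\<forall>l\<in>{1..K}. v l = (if l = k then 1 else 0)"
        using elim_lemma[OF ind' kK] by blast
      obtain u where u: "\<forall>j\<in>idx J. (\<Sum>l\<in>{1..K}. v l * A' l j) = (\<Sum>m\<in>{1..K}. u m * A m j)"
        using transfer_rs[OF dec dec' v(1)] by blast
      have Ak': "A' k j = (\<Sum>m\<in>{1..K}. u m * A m j)" if j: "j \<in> idx J" for j
      proof -
        have "(\<Sum>l\<in>{1..K}. v l * A' l j) = (\<Sum>l\<in>{1..K}. if l = k then A' k j else 0)"
          using v(2) by (intro sum.cong) auto
        also have "\<dots> = A' k j" using kK by simp
        finally show ?thesis using u j by simp
      qed
      have uz: "u m = 0" if m: "m \<in> {1..K}" "m \<noteq> k" for m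
      proof -
        have "\<not> masks J Q m k" using nm m by blast
        then obtain j where j: "j \<in> idx J" "Q m j" "\<not> Q k j"
          unfolding masks_def supp_def by blast
        define S where "S = {l\<in>{1..K}. Q l j}"
        have S: "S \<subseteq> {1..K}" "m \<in> S" "k \<notin> S" using m j by (auto simp: S_def)
        have RS: "R_set J K Q S \<noteq> {}" using R_set_memI[OF j(1), of K Q] S_def by blast
        have indS: "cols_lin_indep (R_set J K Q S) S A" using MA2 S(1) RS by blast
        have "\<forall>j'\<in>R_set J K Q S. (\<Sum>l\<in>S. u l * A l j') = 0"
        proof
          fix j' assume j': "j' \<in> R_set J K Q S"
          have j'J: "j' \<in> idx J" and nq: "\<forall>l\<in>{1..K} - S. \<not> Q l j'"
            using j' unfolding R_set_def by blast+
          have "(\<Sum>l\<in>S. u l * A l j') = (\<Sum>l\<in>{1..K}. u l * A l j')"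
            using S(1) MA3 j'J nq by (intro sum_restrict_S) auto
          also have "\<dots> = A' k j'" using Ak' j'J by simp
          also have "\<dots> = 0" using MA3' kK j'J nq S(3) by blast
          finally show "(\<Sum>l\<in>S. u l * A l j') = 0" .
        qed
        hence "\<forall>l\<in>S. u l = 0" using indS unfolding cols_lin_indep_def by blast
        thus ?thesis using S(2) by blast
      qed
      have "\<forall>j\<in>idx J. u k * A k j + (-1) * A' k j = 0"
      proof
        fix j assume j: "j \<in> idx J"
        have "(\<Sum>m\<in>{1..K}. u m * A m j) = (\<Sum>m\<in>{1..K}. if m = k then u k * A k j else 0)"
          using uz by (intro sum.cong) auto
        also have "\<dots> = u k * A k j" using kK by simp
        finally show "u k * A k j + (-1) * A' k j = 0" using Ak' j by simp
      qed
      thus "lin_dependent2 (idx J) (A k) (A' k)"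
        unfolding lin_dependent2_def by (intro exI[of _ "u k"] exI[of _ "-1"]) simp
    qed
  qed
qed

end
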